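(* Let $M$ be a matroid on a nonempty finite set $S$. Then $M$ is irreducible with respect to free product if and only if $M$ has no free separator other than $\emptyset$ and $S$.
   Context: For a matroid $M$ on $S$ write $\rho_M$ for its rank function, $\rho(M)=\rho_M(S)$, $\nu_M(A)=|A|-\rho_M(A)$, $\lambda_M(A)=\rho(M)-\rho_M(A)$. For matroids $M$ on $S$ and $N$ on $T$ with $S\cap T=\emptyset$, the free product $M\mathbin{\Box} N$ is the matroid on $S\cup T$ whose independent sets are those $A$ with $A\cap S$ independent in $M$ and $\lambda_M(A\cap S)\geq\nu_N(A\cap T)$; it is associative. A nonempty matroid $M$ is irreducible if every factorization of $M$ as a free product of matroids contains $M$ itself as a factor. A cyclic flat is a flat that is a union of circuits. A subset $A\subseteq S$ is a free separator of $M$ if every cyclic flat of $M$ is comparable to $A$ by inclusion. *)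

theory Defs
  imports Main
begin

type_synonym 'a matroid = "'a set \<times> 'a set set"

definition ground :: "'a matroid \<Rightarrow> 'a set" where
  "ground M = fst M"

definition indeps :: "'a matroid \<Rightarrow> 'a set set" where
  "indeps M = snd M"

definition is_matroid :: "'a matroid \<Rightarrow> bool" where
  "is_matroid M \<longleftrightarrow> finite (ground M) \<and>
     (\<forall>X \<in> indeps M. X \<subseteq> ground M) \<and>
     {} \<in> indeps M \<and>
     (\<forall>X Y. Y \<in> indeps M \<longrightarrow> X \<subseteq> Y \<longrightarrow> X \<in> indeps M) \<and>
     (\<forall>X Y. X \<in> indeps M \<longrightarrow> Y \<in> indeps M \<longrightarrow> card X < card Y \<longrightarrow>
        (\<exists>y \<in> Y - X. insert y X \<in> indeps M))"

definition rk :: "'a matroid \<Rightarrow> 'a set \<Rightarrow> nat" where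
  "rk M A = Max (card ` {X \<in> indeps M. X \<subseteq> A})"

definition nullity :: "'a matroid \<Rightarrow> 'a set \<Rightarrow> int" where
  "nullity M A = int (card A) - int (rk M A)"

definition corank_lambda :: "'a matroid \<Rightarrow> 'a set \<Rightarrow> int" where
  "corank_lambda M A = int (rk M (ground M)) - int (rk M A)"

definition free_product :: "'a matroid \<Rightarrow> 'a matroid \<Rightarrow> 'a matroid" where
  "free_product M N =
     (ground M \<union> ground N,
      {A. A \<subseteq> ground M \<union> ground N \<and> A \<inter> ground M \<in> indeps M \<and>
          corank_lambda M (A \<inter> ground M) \<ge> nullity N (A \<inter> ground N)})"

definition empty_matroid :: "'a matroid" where
  "empty_matroid = ({}, {{}})"

text \<open>Free product of a list of factors (associative, with the empty matroid as unit).\<close>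
definition free_product_list :: "'a matroid list \<Rightarrow> 'a matroid" where
  "free_product_list Ns = foldr free_product Ns empty_matroid"

definition irreducible_fp :: "'a matroid \<Rightarrow> bool" where
  "irreducible_fp M \<longleftrightarrow> ground M \<noteq> {} \<and>
     (\<forall>Ns. (\<forall>N \<in> set Ns. is_matroid N) \<longrightarrow>
           (\<forall>i < length Ns. \<forall>j < length Ns. i \<noteq> j \<longrightarrow> ground (Ns ! i) \<inter> ground (Ns ! j) = {}) \<longrightarrow>
           free_product_list Ns = M \<longrightarrow> M \<in> set Ns)"

definition circuit :: "'a matroid \<Rightarrow> 'a set \<Rightarrow> bool" where
  "circuit M C \<longleftrightarrow> C \<subseteq> ground M \<and> C \<notin> indeps M \<and> (\<forall>D. D \<subset> C \<longrightarrow> D \<in> indeps M)"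

definition flat :: "'a matroid \<Rightarrow> 'a set \<Rightarrow> bool" where
  "flat M F \<longleftrightarrow> F \<subseteq> ground M \<and> (\<forall>x \<in> ground M - F. rk M (insert x F) > rk M F)"

definition cyclic_flat :: "'a matroid \<Rightarrow> 'a set \<Rightarrow> bool" where
  "cyclic_flat M F \<longleftrightarrow> flat M F \<and> (\<exists>\<C>. (\<forall>C \<in> \<C>. circuit M C) \<and> F = \<Union>\<C>)"

definition free_separator :: "'a matroid \<Rightarrow> 'a set \<Rightarrow> bool" where
  "free_separator M A \<longleftrightarrow> A \<subseteq> ground M \<and>
     (\<forall>F. cyclic_flat M F \<longrightarrow> F \<subseteq> A \<or> A \<subseteq> F)"

end

theory Submission
  imports Defs
begin

definition dc :: "'a matroid \<Rightarrow> bool" where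
  "dc M \<longleftrightarrow> {} \<in> indeps M \<and> (\<forall>X Y. Y \<in> indeps M \<longrightarrow> X \<subseteq> Y \<longrightarrow> X \<in> indeps M)"

definition wk :: "'a matroid \<Rightarrow> bool" where
  "wk M \<longleftrightarrow> finite (ground M) \<and> (\<forall>X \<in> indeps M. X \<subseteq> ground M) \<and> dc M"

lemma matroid_wk: "is_matroid M \<Longrightarrow> wk M"
  unfolding is_matroid_def wk_def dc_def by (elim conjE) (intro conjI; assumption)

lemma wk_dc: "wk M \<Longrightarrow> dc M" unfolding wk_def by blast

lemma dc_empty: "dc M \<Longrightarrow> {} \<in> indeps M" unfolding dc_def by blast
lemma dc_down: "dc M \<Longrightarrow> Y \<in> indeps M \<Longrightarrow> X \<subseteq> Y \<Longrightarrow> X \<in> indeps M" unfolding dc_def by blast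

lemma rk_fin: "finite A \<Longrightarrow> finite (card ` {X \<in> indeps M. X \<subseteq> A})"
proof -
  assume "finite A"
  have "card ` {X \<in> indeps M. X \<subseteq> A} \<subseteq> card ` Pow A" by blast
  then show ?thesis using \<open>finite A\<close> finite_subset by blast
qed

lemma rk_ge: "X \<in> indeps M \<Longrightarrow> X \<subseteq> A \<Longrightarrow> finite A \<Longrightarrow> card X \<le> rk M A"
  unfolding rk_def by (rule Max_ge[OF rk_fin]) auto

lemma rk_obtain:
  assumes "{} \<in> indeps M" "finite A"
  obtains X where "X \<in> indeps M" "X \<subseteq> A" "card X = rk M A"
proof -
  have "rk M A \<in> card ` {X \<in> indeps M. X \<subseteq> A}"
    unfolding rk_def using assms by (intro Max_in rk_fin) auto
  then obtain X where "X \<in> indeps M" "X \<subseteq> A" "card X = rk M A" by force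
  then show ?thesis by (rule that)
qed

lemma rk_mono: "{} \<in> indeps M \<Longrightarrow> finite B \<Longrightarrow> A \<subseteq> B \<Longrightarrow> rk M A \<le> rk M B"
proof -
  assume a: "{} \<in> indeps M" "finite B" "A \<subseteq> B"
  then have "finite A" using finite_subset by blast
  then obtain X where "X \<in> indeps M" "X \<subseteq> A" "card X = rk M A" using rk_obtain a by blast
  then show ?thesis using rk_ge[of X M B] a by auto
qed

lemma rk_le_card: "{} \<in> indeps M \<Longrightarrow> finite A \<Longrightarrow> rk M A \<le> card A"
proof -
  assume a: "{} \<in> indeps M" "finite A"
  then obtain X where "X \<in> indeps M" "X \<subseteq> A" "card X = rk M A" using rk_obtain by blast
  then show ?thesis using card_mono a by metis
qed

lemma rk_indep: "{} \<in> indeps M \<Longrightarrow> X \<in> indeps M \<Longrightarrow> finite X \<Longrightarrow> rk M X = card X"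
  using rk_ge[of X M X] rk_le_card[of M X] by simp

lemma rk_card_indep: "{} \<in> indeps M \<Longrightarrow> finite A \<Longrightarrow> card A \<le> rk M A \<Longrightarrow> A \<in> indeps M"
proof -
  assume a: "{} \<in> indeps M" "finite A" "card A \<le> rk M A"
  then obtain X where X: "X \<in> indeps M" "X \<subseteq> A" "card X = rk M A" using rk_obtain by blast
  then have "X = A" using card_subset_eq[OF a(2) X(2)] card_mono[OF a(2) X(2)] a(3) by simp
  then show ?thesis using X by simp
qed

lemma rk_insert:
  assumes "dc M" "finite A"
  shows "rk M (insert e A) \<le> rk M A + 1"
proof -
  obtain X where X: "X \<in> indeps M" "X \<subseteq> insert e A" "card X = rk M (insert e A)"
    using rk_obtain[OF dc_empty[OF assms(1)]] assms(2) by (metis finite_insert)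
  have "X - {e} \<in> indeps M" using dc_down[OF assms(1) X(1)] by blast
  moreover have "X - {e} \<subseteq> A" using X by blast
  ultimately have "card (X - {e}) \<le> rk M A" using rk_ge assms(2) by blast
  moreover have "card X \<le> card (X - {e}) + 1"
  proof -
    have "finite X" using X(2) assms(2) finite_subset by blast
    then show ?thesis by (cases "e \<in> X") (auto simp: card_Diff_singleton_if)
  qed
  ultimately show ?thesis using X by linarith
qed

lemma rk_union:
  assumes "dc M" "finite A" "finite E"
  shows "rk M (A \<union> E) \<le> rk M A + card E"
  using assms(3)
proof (induction E rule: finite_induct)
  case empty then show ?case by simp
next
  case (insert x F)
  have "rk M (A \<union> insert x F) = rk M (insert x (A \<union> F))" by simp
  also have "\<dots> \<le> rk M (A \<union> F) + 1" using rk_insert[OF assms(1)] assms(2) insert by simp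
  finally show ?case using insert by simp
qed

lemma nullity_mono:
  assumes "dc M" "finite Y2" "Y1 \<subseteq> Y2"
  shows "nullity M Y1 \<le> nullity M Y2"
proof -
  have f: "finite Y1" using assms finite_subset by blast
  have "Y2 = Y1 \<union> (Y2 - Y1)" using assms by blast
  then have "rk M Y2 \<le> rk M Y1 + card (Y2 - Y1)"
    using rk_union[OF assms(1) f, of "Y2 - Y1"] assms by simp
  moreover have "card (Y2 - Y1) = card Y2 - card Y1" using assms f by (simp add: card_Diff_subset)
  moreover have "card Y1 \<le> card Y2" using assms card_mono by blast
  ultimately show ?thesis unfolding nullity_def by linarith
qed


lemma mat_fin: "is_matroid M \<Longrightarrow> finite (ground M)"
  unfolding is_matroid_def by (elim conjE) assumption
lemma mat_sub: "is_matroid M \<Longrightarrow> X \<in> indeps M \<Longrightarrow> X \<subseteq> ground M"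
  unfolding is_matroid_def by (elim conjE) (erule bspec)
lemma mat_dc: "is_matroid M \<Longrightarrow> dc M"
  using matroid_wk wk_dc by blast
lemma mat_empty: "is_matroid M \<Longrightarrow> {} \<in> indeps M"
  using mat_dc dc_empty by blast
lemma mat_down: "is_matroid M \<Longrightarrow> Y \<in> indeps M \<Longrightarrow> X \<subseteq> Y \<Longrightarrow> X \<in> indeps M"
  using mat_dc dc_down by blast
lemma mat_aug: "is_matroid M \<Longrightarrow> X \<in> indeps M \<Longrightarrow> Y \<in> indeps M \<Longrightarrow> card X < card Y
   \<Longrightarrow> \<exists>y \<in> Y - X. insert y X \<in> indeps M"
proof -
  assume a: "is_matroid M" "X \<in> indeps M" "Y \<in> indeps M" "card X < card Y"
  have "\<forall>X Y. X \<in> indeps M \<longrightarrow> Y \<in> indeps M \<longrightarrow> card X < card Y \<longrightarrow>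
        (\<exists>y \<in> Y - X. insert y X \<in> indeps M)"
    using a(1) unfolding is_matroid_def by (elim conjE) assumption
  then show ?thesis using a(2-4) by blast
qed

lemma mat_fin_sub: "is_matroid M \<Longrightarrow> X \<subseteq> ground M \<Longrightarrow> finite X"
  using mat_fin finite_subset by blast

lemma aug_ext:
  assumes M: "is_matroid M" and J: "J \<in> indeps M" and Z: "Z \<in> indeps M"
  shows "\<exists>J'. J \<subseteq> J' \<and> J' \<subseteq> J \<union> Z \<and> J' \<in> indeps M \<and> card Z \<le> card J'"
  using J
proof (induction "card Z - card J" arbitrary: J rule: less_induct)
  case less
  show ?case
  proof (cases "card Z \<le> card J")
    case True then show ?thesis using less.prems by blast
  next
    case False
    then obtain y where y: "y \<in> Z - J" "insert y J \<in> indeps M"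
      using mat_aug[OF M less.prems Z] by auto
    have fJ: "finite J" using mat_fin_sub[OF M mat_sub[OF M less.prems]] .
    have "card Z - card (insert y J) < card Z - card J" using y fJ False by simp
    from less.hyps[OF this y(2)] obtain J' where
      "insert y J \<subseteq> J'" "J' \<subseteq> insert y J \<union> Z" "J' \<in> indeps M" "card Z \<le> card J'" by blast
    then show ?thesis using y by blast
  qed
qed

lemma circuit_exists:
  assumes M: "is_matroid M"
  shows "D \<subseteq> ground M \<Longrightarrow> D \<notin> indeps M \<Longrightarrow> \<exists>C. C \<subseteq> D \<and> circuit M C"
proof (induction "card D" arbitrary: D rule: less_induct)
  case less
  show ?case
  proof (cases "\<forall>D'. D' \<subset> D \<longrightarrow> D' \<in> indeps M")
    case True
    then have "circuit M D" unfolding circuit_def using less.prems by blast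
    then show ?thesis by blast
  next
    case False
    then obtain D' where D': "D' \<subset> D" "D' \<notin> indeps M" by blast
    have "finite D" using mat_fin_sub[OF M less.prems(1)] .
    then have "card D' < card D" using D' psubset_card_mono by blast
    from less.hyps[OF this _ D'(2)] D' less.prems obtain C where "C \<subseteq> D'" "circuit M C" by blast
    then show ?thesis using D' by blast
  qed
qed

lemma circuit_props:
  assumes M: "is_matroid M" and C: "circuit M C"
  shows "C \<noteq> {}" "finite C" "rk M C = card C - 1" "C \<subseteq> ground M" "C \<notin> indeps M"
proof -
  show sub: "C \<subseteq> ground M" "C \<notin> indeps M" using C unfolding circuit_def by auto
  show ne: "C \<noteq> {}" using mat_empty[OF M] sub by auto
  show f: "finite C" using mat_fin_sub[OF M sub(1)] .
  obtain c where c: "c \<in> C" using ne by blast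
  have "C - {c} \<in> indeps M" using C c unfolding circuit_def by blast
  then have "card (C - {c}) \<le> rk M C" using rk_ge f by blast
  then have ge: "card C - 1 \<le> rk M C" using c f by simp
  have le: "rk M C \<le> card C" using rk_le_card[OF mat_empty[OF M] f] .
  have "rk M C \<noteq> card C" using rk_card_indep[OF mat_empty[OF M] f] sub(2) by force
  then show "rk M C = card C - 1" using ge le by linarith
qed

definition cl :: "'a matroid \<Rightarrow> 'a set \<Rightarrow> 'a set" where
  "cl M C = {e \<in> ground M. rk M (insert e C) = rk M C}"

lemma cl_sup: "C \<subseteq> ground M \<Longrightarrow> C \<subseteq> cl M C"
  unfolding cl_def by (auto simp: insert_absorb)

lemma cl_sub: "cl M C \<subseteq> ground M" unfolding cl_def by auto

lemma cl_rk:
  assumes M: "is_matroid M" and C: "C \<subseteq> ground M"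
  shows "rk M (cl M C) = rk M C"
proof -
  have e: "{} \<in> indeps M" using mat_empty[OF M] .
  have fC: "finite C" using mat_fin_sub[OF M C] .
  have fcl: "finite (cl M C)" using mat_fin_sub[OF M cl_sub] .
  obtain J where J: "J \<in> indeps M" "J \<subseteq> C" "card J = rk M C" using rk_obtain[OF e fC] by blast
  obtain J' where J': "J' \<in> indeps M" "J' \<subseteq> cl M C" "card J' = rk M (cl M C)"
    using rk_obtain[OF e fcl] by blast
  have ge: "rk M C \<le> rk M (cl M C)" using rk_mono[OF e fcl cl_sup[OF C]] .
  show ?thesis
  proof (rule ccontr)
    assume "rk M (cl M C) \<noteq> rk M C"
    then have "card J < card J'" using J J' ge by linarith
    then obtain y where y: "y \<in> J' - J" "insert y J \<in> indeps M" using mat_aug[OF M J(1) J'(1)] by blast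
    have ycl: "rk M (insert y C) = rk M C" using y J' unfolding cl_def by blast
    have "card (insert y J) \<le> rk M (insert y C)"
      using rk_ge[OF y(2)] J(2) fC by blast
    moreover have "card (insert y J) = card J + 1" using y fC J(2) finite_subset by fastforce
    ultimately show False using ycl J(3) by linarith
  qed
qed

lemma cl_flat:
  assumes M: "is_matroid M" and C: "C \<subseteq> ground M"
  shows "flat M (cl M C)"
  unfolding flat_def
proof (intro conjI ballI)
  show "cl M C \<subseteq> ground M" by (rule cl_sub)
  fix x assume x: "x \<in> ground M - cl M C"
  have e: "{} \<in> indeps M" using mat_empty[OF M] .
  have xg: "x \<in> ground M" using x by blast
  have f1: "finite (insert x (cl M C))" using mat_fin_sub[OF M cl_sub[of M C]] by simp
  have f2: "finite (insert x C)" using mat_fin_sub[OF M C] by simp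
  have "rk M (insert x C) \<noteq> rk M C" using x unfolding cl_def by blast
  moreover have "rk M C \<le> rk M (insert x C)" using rk_mono[OF e f2] by blast
  moreover have "rk M (insert x C) \<le> rk M (insert x (cl M C))"
    using rk_mono[OF e f1] cl_sup[OF C] by (meson insert_mono)
  ultimately show "rk M (cl M C) < rk M (insert x (cl M C))" using cl_rk[OF M C] by linarith
qed

lemma cl_cyclic:
  assumes M: "is_matroid M" and C: "circuit M C"
  shows "cyclic_flat M (cl M C)"
proof -
  note cp = circuit_props[OF M C]
  have e: "{} \<in> indeps M" using mat_empty[OF M] .
  have "cl M C = \<Union>{D. circuit M D \<and> D \<subseteq> cl M C}"
  proof
    show "\<Union>{D. circuit M D \<and> D \<subseteq> cl M C} \<subseteq> cl M C" by blast
    show "cl M C \<subseteq> \<Union>{D. circuit M D \<and> D \<subseteq> cl M C}"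
    proof
      fix z assume ecl: "z \<in> cl M C"
      show "z \<in> \<Union>{D. circuit M D \<and> D \<subseteq> cl M C}"
      proof (cases "z \<in> C")
        case True then show ?thesis using C cl_sup[OF cp(4)] by blast
      next
        case False
        obtain c where c: "c \<in> C" using cp(1) by blast
        define J where "J = C - {c}"
        have J: "J \<in> indeps M" using C c unfolding circuit_def J_def by blast
        have cJ: "card J = card C - 1" using c cp(2) unfolding J_def by simp
        have eg: "z \<in> ground M" using cl_sub[of M C] ecl by (rule subsetD)
        have fin: "finite (insert z C)" using cp(2) by simp
        have "insert z J \<notin> indeps M"
        proof
          assume ind: "insert z J \<in> indeps M"
          have "card (insert z J) \<le> rk M (insert z C)" using rk_ge[OF ind _ fin] J_def by blast
          moreover have "card (insert z J) = card C" using cJ False cp(1,2) J_def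
            by (simp add: card_gt_0_iff)
          moreover have "rk M (insert z C) = rk M C" using ecl unfolding cl_def by blast
          moreover have "card C > 0" using cp(1,2) by (simp add: card_gt_0_iff)
          ultimately show False using cp(3) by linarith
        qed
        moreover have "insert z J \<subseteq> ground M" using eg cp(4) J_def by blast
        ultimately obtain D where D: "D \<subseteq> insert z J" "circuit M D"
          using circuit_exists[OF M] by blast
        have "z \<in> D"
        proof (rule ccontr)
          assume "z \<notin> D"
          then have "D \<subseteq> J" using D by blast
          then have "D \<in> indeps M" using mat_down[OF M J] by blast
          then show False using D unfolding circuit_def by blast
        qed
        moreover have "D \<subseteq> cl M C" using D ecl cl_sup[OF cp(4)] J_def by blast
        ultimately show ?thesis using D by blast
      qed
    qed
  qed
  then have "(\<forall>D \<in> {D. circuit M D \<and> D \<subseteq> cl M C}. circuit M D) \<and> cl M C = \<Union>{D. circuit M D \<and> D \<subseteq> cl M C}"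
    by blast
  then have "\<exists>CC. (\<forall>D\<in>CC. circuit M D) \<and> cl M C = \<Union>CC" by (rule exI)
  then show ?thesis unfolding cyclic_flat_def using cl_flat[OF M cp(4)] by (intro conjI)
qed


lemma ground_pair[simp]: "ground (a, b) = a" unfolding ground_def by simp
lemma indeps_pair[simp]: "indeps (a, b) = b" unfolding indeps_def by simp

lemma matroid_eqI: "ground P = ground N \<Longrightarrow> indeps P = indeps N \<Longrightarrow> P = N"
  unfolding ground_def indeps_def by (simp add: prod_eq_iff)

lemma fp_ground: "ground (free_product N R) = ground N \<union> ground R"
  unfolding free_product_def by simp

lemma fp_mem: "Z \<in> indeps (free_product N R) \<longleftrightarrow> Z \<subseteq> ground N \<union> ground R \<and>
   Z \<inter> ground N \<in> indeps N \<and> nullity R (Z \<inter> ground R) \<le> corank_lambda N (Z \<inter> ground N)"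
  unfolding free_product_def by simp

lemma is_matroidI:
  assumes "finite (ground M)" "\<And>X. X \<in> indeps M \<Longrightarrow> X \<subseteq> ground M" "{} \<in> indeps M"
    "\<And>X Y. Y \<in> indeps M \<Longrightarrow> X \<subseteq> Y \<Longrightarrow> X \<in> indeps M"
    "\<And>X Y. X \<in> indeps M \<Longrightarrow> Y \<in> indeps M \<Longrightarrow> card X < card Y \<Longrightarrow> \<exists>y \<in> Y - X. insert y X \<in> indeps M"
  shows "is_matroid M"
  unfolding is_matroid_def
  apply (intro conjI allI impI ballI)
  using assms by auto

definition restr :: "'a matroid \<Rightarrow> 'a set \<Rightarrow> 'a matroid" where
  "restr M A = (A, {X \<in> indeps M. X \<subseteq> A})"

definition contr :: "'a matroid \<Rightarrow> 'a set \<Rightarrow> 'a set \<Rightarrow> 'a matroid" where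
  "contr M A B = (ground M - A, {Y. Y \<subseteq> ground M - A \<and> Y \<union> B \<in> indeps M})"

lemma restr_mat:
  assumes M: "is_matroid M" and A: "A \<subseteq> ground M"
  shows "is_matroid (restr M A)"
proof (rule is_matroidI)
  show "finite (ground (restr M A))" using mat_fin_sub[OF M A] unfolding restr_def by simp
  show "\<And>X. X \<in> indeps (restr M A) \<Longrightarrow> X \<subseteq> ground (restr M A)" unfolding restr_def by simp
  show "{} \<in> indeps (restr M A)" unfolding restr_def using mat_empty[OF M] by simp
  show "\<And>X Y. Y \<in> indeps (restr M A) \<Longrightarrow> X \<subseteq> Y \<Longrightarrow> X \<in> indeps (restr M A)"
    unfolding restr_def using mat_down[OF M] by auto
  fix X Y assume "X \<in> indeps (restr M A)" "Y \<in> indeps (restr M A)" "card X < card Y"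
  then have "X \<in> indeps M" "Y \<in> indeps M" "Y \<subseteq> A" "X \<subseteq> A" "card X < card Y" unfolding restr_def by auto
  then obtain y where "y \<in> Y - X" "insert y X \<in> indeps M" using mat_aug[OF M] by blast
  then show "\<exists>y \<in> Y - X. insert y X \<in> indeps (restr M A)"
    unfolding restr_def using \<open>Y \<subseteq> A\<close> \<open>X \<subseteq> A\<close> by auto
qed

lemma contr_mat:
  assumes M: "is_matroid M" and B: "B \<in> indeps M" "B \<subseteq> A"
  shows "is_matroid (contr M A B)"
proof (rule is_matroidI)
  show "finite (ground (contr M A B))" using mat_fin[OF M] unfolding contr_def by simp
  show "\<And>X. X \<in> indeps (contr M A B) \<Longrightarrow> X \<subseteq> ground (contr M A B)" unfolding contr_def by simp
  show "{} \<in> indeps (contr M A B)" unfolding contr_def using B by simp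
  show "\<And>X Y. Y \<in> indeps (contr M A B) \<Longrightarrow> X \<subseteq> Y \<Longrightarrow> X \<in> indeps (contr M A B)"
  proof -
    fix X Y assume "Y \<in> indeps (contr M A B)" "X \<subseteq> Y"
    then have "Y \<subseteq> ground M - A" "Y \<union> B \<in> indeps M" "X \<union> B \<subseteq> Y \<union> B" unfolding contr_def by auto
    then show "X \<in> indeps (contr M A B)" unfolding contr_def using mat_down[OF M] \<open>X \<subseteq> Y\<close> by auto
  qed
  fix X Y assume "X \<in> indeps (contr M A B)" "Y \<in> indeps (contr M A B)" and c: "card X < card Y"
  then have X: "X \<subseteq> ground M - A" "X \<union> B \<in> indeps M" and Y: "Y \<subseteq> ground M - A" "Y \<union> B \<in> indeps M"
    unfolding contr_def by auto
  have fX: "finite X" "finite Y" "finite B" using mat_fin_sub[OF M] X Y mat_sub[OF M B(1)] by auto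
  have dX: "X \<inter> B = {}" "Y \<inter> B = {}" using X Y B by auto
  have "card (X \<union> B) < card (Y \<union> B)" using c fX dX by (simp add: card_Un_disjoint)
  then obtain y where y: "y \<in> (Y \<union> B) - (X \<union> B)" "insert y (X \<union> B) \<in> indeps M"
    using mat_aug[OF M X(2) Y(2)] by blast
  have "insert y X \<subseteq> ground M - A" using y X Y by blast
  moreover have "insert y X \<union> B = insert y (X \<union> B)" by simp
  ultimately have "insert y X \<in> indeps (contr M A B)" unfolding contr_def using y by simp
  then show "\<exists>y \<in> Y - X. insert y X \<in> indeps (contr M A B)" using y by blast
qed

lemma rk_restr: "X \<subseteq> A \<Longrightarrow> rk (restr M A) X = rk M X"
proof -
  assume "X \<subseteq> A"
  then have "{X' \<in> indeps (restr M A). X' \<subseteq> X} = {X' \<in> indeps M. X' \<subseteq> X}"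
    unfolding restr_def by auto
  then show ?thesis unfolding rk_def by simp
qed

lemma rk_N0: "rk (empty_matroid :: 'a matroid) {} = 0"
proof -
  have "card ` {X \<in> indeps (empty_matroid :: 'a matroid). X \<subseteq> {}} = {0}" unfolding empty_matroid_def by auto
  then show ?thesis unfolding rk_def by (simp only:) simp
qed

lemma fp_N0_right:
  assumes N: "wk N"
  shows "free_product N empty_matroid = N"
proof (rule matroid_eqI)
  show "ground (free_product N empty_matroid) = ground N"
    unfolding fp_ground empty_matroid_def by simp
  have fin: "finite (ground N)" and sub: "\<And>X. X \<in> indeps N \<Longrightarrow> X \<subseteq> ground N" and e: "{} \<in> indeps N"
    using N unfolding wk_def dc_def by auto
  show "indeps (free_product N empty_matroid) = indeps N"
  proof (intro set_eqI iffI)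
    fix Z assume "Z \<in> indeps (free_product N empty_matroid)"
    then have "Z \<subseteq> ground N" "Z \<inter> ground N \<in> indeps N" unfolding fp_mem empty_matroid_def by auto
    then show "Z \<in> indeps N" by (simp add: Int_absorb2)
  next
    fix Z assume Z: "Z \<in> indeps N"
    have "rk N Z \<le> rk N (ground N)" using rk_mono[OF e fin sub[OF Z]] .
    then show "Z \<in> indeps (free_product N empty_matroid)" unfolding fp_mem
      using Z sub[OF Z] rk_N0 unfolding empty_matroid_def nullity_def corank_lambda_def
      by (simp add: Int_absorb2)
  qed
qed

lemma fp_N0_left:
  assumes R: "wk R"
  shows "free_product empty_matroid R = R"
proof (rule matroid_eqI)
  show "ground (free_product empty_matroid R) = ground R"
    unfolding fp_ground empty_matroid_def by simp
  have fin: "finite (ground R)" and sub: "\<And>X. X \<in> indeps R \<Longrightarrow> X \<subseteq> ground R" and e: "{} \<in> indeps R"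
    using R unfolding wk_def dc_def by auto
  have l0: "corank_lambda (empty_matroid :: 'a matroid) {} = 0" unfolding corank_lambda_def
    using rk_N0 unfolding empty_matroid_def by simp
  show "indeps (free_product empty_matroid R) = indeps R"
  proof (intro set_eqI iffI)
    fix Z assume Z: "Z \<in> indeps (free_product empty_matroid R)"
    then have Zs: "Z \<subseteq> ground R" unfolding fp_mem empty_matroid_def by simp
    have "Z \<inter> ground empty_matroid = {}" unfolding empty_matroid_def by simp
    moreover have "Z \<inter> ground R = Z" using Zs by blast
    moreover have "nullity R (Z \<inter> ground R) \<le> corank_lambda empty_matroid (Z \<inter> ground empty_matroid)"
      using Z unfolding fp_mem by blast
    ultimately have "nullity R Z \<le> corank_lambda (empty_matroid :: 'a matroid) {}" by simp
    then have "nullity R Z \<le> 0" using l0 by simp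
    then have "card Z \<le> rk R Z" unfolding nullity_def by simp
    then show "Z \<in> indeps R" using rk_card_indep[OF e] Zs fin finite_subset by blast
  next
    fix Z assume Z: "Z \<in> indeps R"
    have "rk R Z = card Z" using rk_indep[OF e Z] sub[OF Z] fin finite_subset by blast
    then have "nullity R Z = 0" unfolding nullity_def by simp
    moreover have "Z \<inter> ground empty_matroid = {}" "{} \<in> indeps (empty_matroid :: 'a matroid)" unfolding empty_matroid_def by simp_all
    ultimately show "Z \<in> indeps (free_product empty_matroid R)" unfolding fp_mem
      using Z sub[OF Z] l0 by (auto simp: Int_absorb2)
  qed
qed


lemma sep_decomp:
  assumes M: "is_matroid M" and A: "A \<subseteq> ground M" and sep: "free_separator M A"
    and B: "B \<in> indeps M" "B \<subseteq> A" "card B = rk M A"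
  shows "free_product (restr M A) (contr M A B) = M"
proof (rule matroid_eqI)
  show "ground (free_product (restr M A) (contr M A B)) = ground M"
    unfolding fp_ground restr_def contr_def using A by auto
  have e: "{} \<in> indeps M" using mat_empty[OF M] .
  have fA: "finite A" using mat_fin_sub[OF M A] .
  have fB: "finite B" using fA B finite_subset by blast
  have ec: "{} \<in> indeps (contr M A B)" unfolding contr_def using B by simp
  show "indeps (free_product (restr M A) (contr M A B)) = indeps M"
  proof (intro set_eqI)
    fix Z
    define X where "X = Z \<inter> A"
    define Y where "Y = Z \<inter> (ground M - A)"
    have gr: "ground (restr M A) = A" "ground (contr M A B) = ground M - A"
      unfolding restr_def contr_def by simp_all
    have irestr: "X \<in> indeps (restr M A) \<longleftrightarrow> X \<in> indeps M" unfolding restr_def X_def by simp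
    have lam: "corank_lambda (restr M A) X = int (card B) - int (rk M X)"
      unfolding corank_lambda_def gr using rk_restr[of A A M] rk_restr[of X A M] B(3) X_def by simp
    have nul: "nullity (contr M A B) Y = int (card Y) - int (rk (contr M A B) Y)"
      unfolding nullity_def ..
    have fY: "finite Y" unfolding Y_def using mat_fin[OF M] by simp
    have dcc: "dc (contr M A B)" using matroid_wk[OF contr_mat[OF M B(1,2)]] wk_dc by blast
    show "Z \<in> indeps (free_product (restr M A) (contr M A B)) \<longleftrightarrow> Z \<in> indeps M"
    proof
      assume Z: "Z \<in> indeps (free_product (restr M A) (contr M A B))"
      then have ZS: "Z \<subseteq> ground M" and XI: "X \<in> indeps M"
        and ineq: "nullity (contr M A B) Y \<le> corank_lambda (restr M A) X"
        unfolding fp_mem gr X_def Y_def using A irestr X_def by auto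
      have fX: "finite X" using fA X_def by simp
      have rX: "rk M X = card X" using rk_indep[OF e XI fX] .
      have ZXY: "Z = X \<union> Y" "X \<inter> Y = {}" using ZS unfolding X_def Y_def by auto
      have cZ: "card Z = card X + card Y" using ZXY fX fY by (simp add: card_Un_disjoint)
      have key: "card X + card Y \<le> card B + rk (contr M A B) Y"
        using ineq lam nul rX by linarith
      obtain Y' where Y': "Y' \<in> indeps (contr M A B)" "Y' \<subseteq> Y" "card Y' = rk (contr M A B) Y"
        using rk_obtain[OF ec fY] by blast
      have Y'B: "Y' \<union> B \<in> indeps M" "Y' \<subseteq> ground M - A" using Y' unfolding contr_def by auto
      have fY': "finite Y'" using fY Y' finite_subset by blast
      have cY'B: "card (Y' \<union> B) = card Y' + card B"
        using Y'B B fY' fB by (subst card_Un_disjoint) auto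
      show "Z \<in> indeps M"
      proof (rule ccontr)
        assume "Z \<notin> indeps M"
        then obtain C where C: "C \<subseteq> Z" "circuit M C" using circuit_exists[OF M ZS] by blast
        note cp = circuit_props[OF M C(2)]
        have "\<not> C \<subseteq> A"
        proof
          assume "C \<subseteq> A"
          then have "C \<subseteq> X" using C X_def by blast
          then show False using mat_down[OF M XI] cp(5) by blast
        qed
        moreover have CK: "C \<subseteq> cl M C" using cl_sup[OF cp(4)] .
        moreover have "cl M C \<subseteq> A \<or> A \<subseteq> cl M C"
          using sep cl_cyclic[OF M C(2)] unfolding free_separator_def by blast
        ultimately have AK: "A \<subseteq> cl M C" by blast
        have sub: "Y' \<union> B \<subseteq> cl M C \<union> (Z - C)" using AK B(2) Y' Y_def CK by blast
        have fK: "finite (cl M C)" using mat_fin_sub[OF M cl_sub] .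
        have fZ: "finite Z" using mat_fin_sub[OF M ZS] .
        have "card (Y' \<union> B) \<le> rk M (cl M C \<union> (Z - C))"
          using rk_ge[OF Y'B(1) sub] fK fZ by blast
        also have "\<dots> \<le> rk M (cl M C) + card (Z - C)"
          using rk_union[OF mat_dc[OF M] fK] fZ by blast
        also have "\<dots> = (card C - 1) + (card Z - card C)"
          using cl_rk[OF M cp(4)] cp(3) card_Diff_subset[OF cp(2) C(1)] by simp
        finally have "card (Y' \<union> B) \<le> (card C - 1) + (card Z - card C)" .
        moreover have "card C \<ge> 1" using cp(1,2) by (simp add: Suc_leI card_gt_0_iff)
        moreover have "card C \<le> card Z" using card_mono[OF fZ C(1)] .
        ultimately show False using cY'B cZ key Y'(3) by linarith
      qed
    next
      assume Z: "Z \<in> indeps M"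
      have ZS: "Z \<subseteq> ground M" using mat_sub[OF M Z] .
      have XI: "X \<in> indeps M" using mat_down[OF M Z] X_def by blast
      have fX: "finite X" using fA X_def by simp
      have fZ: "finite Z" using mat_fin_sub[OF M ZS] .
      have rX: "rk M X = card X" using rk_indep[OF e XI fX] .
      have ZXY: "Z = X \<union> Y" "X \<inter> Y = {}" using ZS unfolding X_def Y_def by auto
      have cZ: "card Z = card X + card Y" using ZXY fX fY by (simp add: card_Un_disjoint)
      obtain J' where J': "B \<subseteq> J'" "J' \<subseteq> B \<union> Z" "J' \<in> indeps M" "card Z \<le> card J'"
        using aug_ext[OF M B(1) Z] by blast
      have fJ': "finite J'" using J' fB fZ finite_subset by blast
      have JY: "J' - B \<subseteq> Y"
      proof
        fix y assume y: "y \<in> J' - B"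
        have "y \<notin> A"
        proof
          assume yA: "y \<in> A"
          have "insert y B \<in> indeps M" using mat_down[OF M J'(3)] J'(1) y by blast
          then have "card (insert y B) \<le> rk M A" using rk_ge fA yA B(2) by blast
          then show False using y B(3) fB by simp
        qed
        then show "y \<in> Y" using y J'(2) ZS unfolding Y_def by blast
      qed
      have "J' - B \<in> indeps (contr M A B)"
        unfolding contr_def using JY J'(1,3) Y_def Un_absorb2[OF J'(1)] by (auto simp: Un_commute)
      then have "card (J' - B) \<le> rk (contr M A B) Y" using rk_ge JY fY by blast
      moreover have "card (J' - B) = card J' - card B" using card_Diff_subset[OF fB J'(1)] .
      moreover have "card B \<le> card J'" using card_mono[OF fJ' J'(1)] .
      ultimately have key: "card X + card Y \<le> card B + rk (contr M A B) Y" using cZ J'(4) by linarith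
      have "nullity (contr M A B) Y \<le> corank_lambda (restr M A) X" using key lam nul rX by linarith
      moreover have "X \<in> indeps (restr M A)" using irestr XI by simp
      ultimately show "Z \<in> indeps (free_product (restr M A) (contr M A B))"
        unfolding fp_mem gr X_def Y_def using ZS A by auto
    qed
  qed
qed


lemma wk_fp:
  assumes N: "wk N" and R: "wk R"
  shows "wk (free_product N R)"
proof -
  have fN: "finite (ground N)" and eN: "{} \<in> indeps N" and dN: "dc N"
    using N unfolding wk_def dc_def by auto
  have fR: "finite (ground R)" and eR: "{} \<in> indeps R" and dR: "dc R"
    using R unfolding wk_def dc_def by auto
  have "finite (ground (free_product N R))" using fN fR unfolding fp_ground by simp
  moreover have "\<forall>X\<in>indeps (free_product N R). X \<subseteq> ground (free_product N R)"
    by (auto simp: fp_mem fp_ground)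
  moreover have "{} \<in> indeps (free_product N R)"
  proof -
    have "rk N {} \<le> rk N (ground N)" using rk_mono[OF eN fN] by blast
    then have "0 \<le> corank_lambda N {}" unfolding corank_lambda_def by simp
    moreover have "nullity R {} \<le> 0" unfolding nullity_def by simp
    ultimately show ?thesis unfolding fp_mem using eN by simp
  qed
  moreover have "\<forall>X Y. Y \<in> indeps (free_product N R) \<longrightarrow> X \<subseteq> Y \<longrightarrow> X \<in> indeps (free_product N R)"
  proof (intro allI impI)
    fix X Y assume Y: "Y \<in> indeps (free_product N R)" and XY: "X \<subseteq> Y"
    then have Y1: "Y \<subseteq> ground N \<union> ground R" "Y \<inter> ground N \<in> indeps N"
      "nullity R (Y \<inter> ground R) \<le> corank_lambda N (Y \<inter> ground N)" unfolding fp_mem by auto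
    have s1: "X \<inter> ground N \<subseteq> Y \<inter> ground N" "X \<inter> ground R \<subseteq> Y \<inter> ground R" using XY by auto
    have f1: "finite (Y \<inter> ground N)" "finite (Y \<inter> ground R)" using fN fR by auto
    have "X \<inter> ground N \<in> indeps N" using dc_down[OF dN Y1(2) s1(1)] .
    moreover have "nullity R (X \<inter> ground R) \<le> nullity R (Y \<inter> ground R)"
      using nullity_mono[OF dR f1(2) s1(2)] .
    moreover have "rk N (X \<inter> ground N) \<le> rk N (Y \<inter> ground N)"
      using rk_mono[OF eN f1(1) s1(1)] .
    ultimately show "X \<in> indeps (free_product N R)" unfolding fp_mem
      using Y1 XY unfolding corank_lambda_def by auto
  qed
  ultimately show ?thesis unfolding wk_def dc_def by blast
qed

lemma sep_fp:
  assumes N: "wk N" and R: "wk R" and disj: "ground N \<inter> ground R = {}"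
  shows "free_separator (free_product N R) (ground N)"
  unfolding free_separator_def
proof (intro conjI allI impI)
  define P where "P = free_product N R"
  define S where "S = ground N"
  define T where "T = ground R"
  have gP: "ground P = S \<union> T" unfolding P_def S_def T_def fp_ground ..
  have fN: "finite S" and eN: "{} \<in> indeps N" and dN: "dc N"
    using N unfolding wk_def dc_def S_def by auto
  have fR: "finite T" and eR: "{} \<in> indeps R" and dR: "dc R"
    using R unfolding wk_def dc_def T_def by auto
  have wP: "wk P" unfolding P_def using wk_fp[OF N R] .
  have eP: "{} \<in> indeps P" using wP unfolding wk_def dc_def by auto
  have memP: "\<And>Z. Z \<in> indeps P \<longleftrightarrow> Z \<subseteq> S \<union> T \<and> Z \<inter> S \<in> indeps N \<and>
       nullity R (Z \<inter> T) \<le> corank_lambda N (Z \<inter> S)"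
    unfolding P_def S_def T_def fp_mem ..
  have STd: "S \<inter> T = {}" using disj unfolding S_def T_def .
  have rkN: "\<And>X. X \<in> indeps N \<Longrightarrow> X \<subseteq> S \<Longrightarrow> rk N X = card X"
    using rk_indep[OF eN] fN finite_subset by blast
  show "ground N \<subseteq> ground (free_product N R)" unfolding fp_ground by blast
  fix F assume cf: "cyclic_flat (free_product N R) F"
  show "F \<subseteq> ground N \<or> ground N \<subseteq> F"
  proof (rule ccontr)
    assume "\<not> (F \<subseteq> ground N \<or> ground N \<subseteq> F)"
    then obtain t s where t: "t \<in> F" "t \<notin> S" and s: "s \<in> S" "s \<notin> F" unfolding S_def by blast
    obtain CC where CC: "\<forall>C\<in>CC. circuit P C" "F = \<Union>CC"
      using cf unfolding cyclic_flat_def P_def by blast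
    obtain C where C: "circuit P C" "t \<in> C" "C \<subseteq> F" using CC t by blast
    have flF: "flat P F" using cf unfolding cyclic_flat_def P_def by blast
    have FP: "F \<subseteq> S \<union> T" using flF gP unfolding flat_def by blast
    have tT: "t \<in> T" using t FP by blast
    have less: "rk P F < rk P (insert s F)" using flF s gP unfolding flat_def by blast
    have fF: "finite F" using FP fN fR finite_subset by blast
    have fsF: "finite (insert s F)" using fF by simp
    obtain J where J: "J \<in> indeps P" "J \<subseteq> insert s F" "card J = rk P (insert s F)"
      using rk_obtain[OF eP fsF] by blast
    have sJ: "s \<in> J"
    proof (rule ccontr)
      assume "s \<notin> J"
      then have "J \<subseteq> F" using J by blast
      then have "card J \<le> rk P F" using rk_ge[OF J(1) _ fF] by blast
      then show False using less J(3) by linarith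
    qed
    define X where "X = J \<inter> S"
    define Y where "Y = J \<inter> T"
    have J1: "J \<subseteq> S \<union> T" "X \<in> indeps N" "nullity R Y \<le> corank_lambda N X"
      using J(1) unfolding memP X_def Y_def by auto
    have fX: "finite X" "finite Y" unfolding X_def Y_def using fN fR by auto
    have XS: "X \<subseteq> S" "Y \<subseteq> T" unfolding X_def Y_def by auto
    have JXY: "J = X \<union> Y" "X \<inter> Y = {}" using J1(1) STd unfolding X_def Y_def by auto
    have cJ: "card J = card X + card Y" using JXY fX by (simp add: card_Un_disjoint)
    have sX: "s \<in> X" using sJ s unfolding X_def by blast
    have rX: "rk N X = card X" using rkN[OF J1(2) XS(1)] .
    have YF: "Y \<subseteq> F" using J(2) XS(2) s STd unfolding Y_def by blast
    have "\<exists>J'. J' \<in> indeps P \<and> J' \<subseteq> F \<and> card J' = card J"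
    proof (cases "\<exists>t'. t' \<in> F \<inter> T \<and> t' \<notin> Y")
      case True
      then obtain t' where t': "t' \<in> F" "t' \<in> T" "t' \<notin> Y" by blast
      define J' where "J' = insert t' (J - {s})"
      have t'S: "t' \<notin> S" using t' STd by blast
      have sT: "s \<notin> T" using s STd by blast
      have J'S: "J' \<inter> S = X - {s}" unfolding J'_def X_def using t'S by blast
      have J'T: "J' \<inter> T = insert t' Y" unfolding J'_def Y_def using t' sT by blast
      have X1: "X - {s} \<in> indeps N" using dc_down[OF dN J1(2)] by blast
      have rX1: "rk N (X - {s}) = card X - 1" using rkN[OF X1] XS sX fX by auto
      have "X \<noteq> {}" using sX by blast
      then have "card X > 0" using fX(1) by (simp add: card_gt_0_iff)
      then have cX: "card X \<ge> 1" by simp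
      have lam1: "corank_lambda N (X - {s}) = corank_lambda N X + 1"
        unfolding corank_lambda_def using rX1 rX cX by simp
      have "rk R Y \<le> rk R (insert t' Y)" using rk_mono[OF eR] fX(2) by (meson finite_insert subset_insertI)
      then have nul1: "nullity R (insert t' Y) \<le> nullity R Y + 1"
        unfolding nullity_def using fX(2) t'(3) by simp
      have "J' \<subseteq> S \<union> T" unfolding J'_def using J1(1) t'(2) by blast
      moreover have "nullity R (insert t' Y) \<le> corank_lambda N (X - {s})" using nul1 lam1 J1(3) by linarith
      ultimately have "J' \<in> indeps P" unfolding memP J'S J'T using X1 by blast
      moreover have "J' \<subseteq> F"
      proof -
        have "J - {s} \<subseteq> F" using J(2) by blast
        then show ?thesis unfolding J'_def insert_subset using t'(1) by (intro conjI)
      qed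
      moreover have "card J' = card J"
      proof -
        have "t' \<notin> X" using XS(1) t'S by blast
        then have "t' \<notin> J" using JXY(1) t'(3) by simp
        then have "t' \<notin> J - {s}" by simp
        moreover have "finite J" using JXY fX by simp
        moreover have "card J > 0" using sJ \<open>finite J\<close> card_gt_0_iff by blast
        ultimately show ?thesis unfolding J'_def using sJ by simp
      qed
      ultimately show ?thesis by blast
    next
      case False
      then have FTY: "F \<inter> T \<subseteq> Y" by blast
      have cP: "C \<subseteq> S \<union> T" "C \<notin> indeps P" "C - {t} \<in> indeps P"
        using C FP unfolding circuit_def by auto
      have "(C - {t}) \<inter> S = C \<inter> S" using t by blast
      then have CSI: "C \<inter> S \<in> indeps N" using cP(3) unfolding memP by metis
      then have nl: "\<not> nullity R (C \<inter> T) \<le> corank_lambda N (C \<inter> S)" using cP(1,2) memP[of C] by blast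
      have "C \<inter> T \<subseteq> Y" using FTY C(3) by blast
      then have "nullity R (C \<inter> T) \<le> nullity R Y"
        using nullity_mono[OF dR fX(2)] by blast
      then have "corank_lambda N (C \<inter> S) < corank_lambda N X" using nl J1(3) by linarith
      then have "rk N X < rk N (C \<inter> S)" unfolding corank_lambda_def by linarith
      then have "card X < card (C \<inter> S)" using rkN[OF CSI] rX by simp
      then obtain X'' where X'': "X'' \<subseteq> C \<inter> S" "card X'' = card X"
        by (meson less_imp_le obtain_subset_with_card_n)
      have X''I: "X'' \<in> indeps N" using dc_down[OF dN CSI X''(1)] .
      have rX'': "rk N X'' = card X" using rkN[OF X''I] X'' by auto
      define J' where "J' = X'' \<union> Y"
      have J'S: "J' \<inter> S = X''" unfolding J'_def using X'' XS STd by blast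
      have J'T: "J' \<inter> T = Y" unfolding J'_def using X'' XS STd by blast
      have "corank_lambda N X'' = corank_lambda N X" unfolding corank_lambda_def using rX'' rX by simp
      moreover have "J' \<subseteq> S \<union> T" unfolding J'_def using X''(1) XS(2) by blast
      ultimately have "J' \<in> indeps P" unfolding memP J'S J'T using X''I J1(3) by simp
      moreover have "J' \<subseteq> F" unfolding J'_def using X'' C(3) YF by blast
      moreover have "card J' = card J"
      proof -
        have "finite X''" using X'' fN finite_subset by blast
        moreover have "X'' \<inter> Y = {}" using X'' XS STd by blast
        ultimately show ?thesis unfolding J'_def using cJ X''(2) fX by (simp add: card_Un_disjoint)
      qed
      ultimately show ?thesis by blast
    qed
    then obtain J' where "J' \<in> indeps P" "J' \<subseteq> F" "card J' = card J" by blast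
    then have "card J \<le> rk P F" using rk_ge fF by metis
    then show False using less J(3) by linarith
  qed
qed


definition disj_grounds :: "'a matroid list \<Rightarrow> bool" where
  "disj_grounds Ns \<longleftrightarrow> (\<forall>i < length Ns. \<forall>j < length Ns. i \<noteq> j \<longrightarrow> ground (Ns ! i) \<inter> ground (Ns ! j) = {})"

lemma disj_Cons:
  assumes "disj_grounds (N # Ns)"
  shows "disj_grounds Ns" "\<forall>R \<in> set Ns. ground N \<inter> ground R = {}"
proof -
  show "disj_grounds Ns" unfolding disj_grounds_def
  proof (intro allI impI)
    fix i j assume "i < length Ns" "j < length Ns" "i \<noteq> j"
    then show "ground (Ns ! i) \<inter> ground (Ns ! j) = {}"
      using assms unfolding disj_grounds_def
      by (metis Suc_inject length_Cons not_less_eq nth_Cons_Suc)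
  qed
  show "\<forall>R \<in> set Ns. ground N \<inter> ground R = {}"
  proof
    fix R assume "R \<in> set Ns"
    then obtain j where j: "j < length Ns" "Ns ! j = R" by (meson in_set_conv_nth)
    have "ground ((N # Ns) ! 0) \<inter> ground ((N # Ns) ! Suc j) = {}"
      using assms j(1) unfolding disj_grounds_def by (metis Suc_less_eq length_Cons nat.distinct(1) zero_less_Suc)
    then show "ground N \<inter> ground R = {}" using j by simp
  qed
qed

lemma wk_N0: "wk empty_matroid"
  unfolding wk_def dc_def empty_matroid_def by auto

lemma fpl_Cons: "free_product_list (N # Ns) = free_product N (free_product_list Ns)"
  unfolding free_product_list_def by simp

lemma empty_ground_N0: "is_matroid N \<Longrightarrow> ground N = {} \<Longrightarrow> N = empty_matroid"
proof -
  assume a: "is_matroid N" "ground N = {}"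
  have "indeps N = {{}}" using mat_sub[OF a(1)] mat_empty[OF a(1)] a(2) by blast
  then show ?thesis using a(2) unfolding empty_matroid_def by (intro matroid_eqI) simp_all
qed

lemma ind_main:
  "(\<forall>N\<in>set Ns. is_matroid N) \<Longrightarrow> disj_grounds Ns \<Longrightarrow>
    wk (free_product_list Ns) \<and> ground (free_product_list Ns) = \<Union>(ground ` set Ns) \<and>
    (ground (free_product_list Ns) = {} \<longrightarrow> free_product_list Ns = empty_matroid) \<and>
    (free_product_list Ns \<in> set Ns \<or> ground (free_product_list Ns) = {} \<or>
      (\<exists>A. free_separator (free_product_list Ns) A \<and> A \<noteq> {} \<and> A \<noteq> ground (free_product_list Ns)))"
proof (induction Ns)
  case Nil
  have "free_product_list [] = (empty_matroid :: 'a matroid)" unfolding free_product_list_def by simp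
  then show ?case using wk_N0 unfolding empty_matroid_def by simp
next
  case (Cons N Ns)
  define R where "R = free_product_list Ns"
  have P: "free_product_list (N # Ns) = free_product N R" unfolding R_def fpl_Cons ..
  have NM: "is_matroid N" using Cons.prems by simp
  have IH: "wk R" "ground R = \<Union>(ground ` set Ns)" "ground R = {} \<longrightarrow> R = empty_matroid"
    "R \<in> set Ns \<or> ground R = {} \<or> (\<exists>A. free_separator R A \<and> A \<noteq> {} \<and> A \<noteq> ground R)"
    using Cons.IH Cons.prems disj_Cons[OF Cons.prems(2)] unfolding R_def by auto
  have dj: "ground N \<inter> ground R = {}" using disj_Cons(2)[OF Cons.prems(2)] IH(2) by blast
  have wP: "wk (free_product N R)" using wk_fp[OF matroid_wk[OF NM] IH(1)] .
  have gP: "ground (free_product N R) = \<Union>(ground ` set (N # Ns))" unfolding fp_ground IH(2) by simp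
  show ?case
  proof (cases "ground N = {}")
    case True
    then have "N = empty_matroid" using empty_ground_N0[OF NM] by simp
    then have PR: "free_product N R = R" using fp_N0_left[OF IH(1)] by simp
    show ?thesis unfolding P using wP gP IH(3,4) unfolding PR by auto
  next
    case False
    note NF = False
    show ?thesis
    proof (cases "ground R = {}")
      case True
      then have "free_product N R = N" using IH(3) fp_N0_right[OF matroid_wk[OF NM]] by simp
      then show ?thesis unfolding P using wP gP NF by auto
    next
      case False
      have "free_separator (free_product N R) (ground N)"
        using sep_fp[OF matroid_wk[OF NM] IH(1) dj] .
      moreover have "ground N \<noteq> ground (free_product N R)"
        using False dj unfolding fp_ground by blast
      ultimately show ?thesis unfolding P using wP gP NF by auto
    qed
  qed
qed

theorem theorem6p4:
  fixes M :: "'a matroid"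
  assumes "is_matroid M" and "ground M \<noteq> {}"
  shows "irreducible_fp M \<longleftrightarrow>
           (\<forall>A. free_separator M A \<longrightarrow> A = {} \<or> A = ground M)"
proof
  assume irr: "irreducible_fp M"
  show "\<forall>A. free_separator M A \<longrightarrow> A = {} \<or> A = ground M"
  proof (intro allI impI)
    fix A assume sep: "free_separator M A"
    show "A = {} \<or> A = ground M"
    proof (rule ccontr)
      assume nt: "\<not> (A = {} \<or> A = ground M)"
      have M: "is_matroid M" by fact
      have AS: "A \<subseteq> ground M" using sep unfolding free_separator_def by blast
      obtain B where B: "B \<in> indeps M" "B \<subseteq> A" "card B = rk M A"
        using rk_obtain[OF mat_empty[OF M] mat_fin_sub[OF M AS]] by blast
      define Ns where "Ns = [restr M A, contr M A B]"
      have mats: "\<forall>N \<in> set Ns. is_matroid N"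
        unfolding Ns_def using restr_mat[OF M AS] contr_mat[OF M B(1,2)] by simp
      have dj: "\<forall>i < length Ns. \<forall>j < length Ns. i \<noteq> j \<longrightarrow> ground (Ns ! i) \<inter> ground (Ns ! j) = {}"
      proof (intro allI impI)
        fix i j assume "i < length Ns" "j < length Ns" "i \<noteq> j"
        then have "(i = 0 \<and> j = 1) \<or> (i = 1 \<and> j = 0)" unfolding Ns_def by auto
        then show "ground (Ns ! i) \<inter> ground (Ns ! j) = {}"
          unfolding Ns_def restr_def contr_def by auto
      qed
      have "free_product_list Ns = free_product (restr M A) (free_product (contr M A B) empty_matroid)"
        unfolding Ns_def free_product_list_def by simp
      also have "\<dots> = free_product (restr M A) (contr M A B)"
        using fp_N0_right[OF matroid_wk[OF contr_mat[OF M B(1,2)]]] by simp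
      also have "\<dots> = M" using sep_decomp[OF M AS sep B] .
      finally have "free_product_list Ns = M" .
      then have "M \<in> set Ns" using irr mats dj unfolding irreducible_fp_def by blast
      then have "M = restr M A \<or> M = contr M A B" unfolding Ns_def by simp
      then have "ground M = ground (restr M A) \<or> ground M = ground (contr M A B)" by (elim disjE) simp_all
      then have "ground M = A \<or> ground M = ground M - A" unfolding restr_def contr_def by simp
      then show False using nt AS by auto
    qed
  qed
next
  assume H: "\<forall>A. free_separator M A \<longrightarrow> A = {} \<or> A = ground M"
  show "irreducible_fp M" unfolding irreducible_fp_def
  proof (intro conjI allI impI)
    show "ground M \<noteq> {}" by fact
    fix Ns :: "'a matroid list"
    assume mats: "\<forall>N\<in>set Ns. is_matroid N"
      and dj: "\<forall>i<length Ns. \<forall>j<length Ns. i \<noteq> j \<longrightarrow> ground (Ns ! i) \<inter> ground (Ns ! j) = {}"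
      and eq: "free_product_list Ns = M"
    have "disj_grounds Ns" using dj unfolding disj_grounds_def .
    from ind_main[OF mats this] eq
    show "M \<in> set Ns" using H assms(2) by auto
  qed
qed

end
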